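(* Let $r\ge1$ and let $a_{-r},\dots,a_0$ be coefficients with $a_{-r}\ne0$ and $|a_0|<1$. Then for every integer $\ell\ge0$ and every $z\in\overline{\mathcal U}$, $\det K_{0,r-1}(z)\neq 0$ and \[ \frac{\det K_{\ell,\ell+r-1}(z)}{\det K_{0,r-1}(z)}=(-1)^{\ell r}\left(\frac{a_{-r}}{a_0-z}\right)^{\ell}. \]
   Context: $\overline{\mathcal U}=\{z\in\mathbb C:|z|\ge1\}$. For $z\in\overline{\mathcal U}$, let $\kappa_1,\dots,\kappa_M$ be the distinct roots of the degree-$r$ equation $z\kappa^r=\sum_{k=-r}^0 a_k\kappa^{r+k}$ in $\kappa$, with multiplicities $\beta_1,\dots,\beta_M$, $\beta_1+\dots+\beta_M=r$. For integers $-r\le i\le j$, $K_{i,j}(z)\in\mathcal M_{j-i+1,r}(\mathbb C)$ is the matrix whose columns, indexed by pairs $(s,q)$ with $1\le s\le M$, $0\le q\le\beta_s-1$ and taken in some fixed order (the same for all $i,j$), are the vectors $(\ell'^{\,q}\kappa_s^{\ell'})_{\ell'=i,\dots,j}$, with the convention $0^0=1$. *)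

theory Defs
  imports "HOL-Computational_Algebra.Polynomial" "Jordan_Normal_Form.Determinant"
begin

definition char_poly :: "(int \<Rightarrow> complex) \<Rightarrow> nat \<Rightarrow> complex \<Rightarrow> complex poly" where
  "char_poly a r z = monom z r - (\<Sum>k\<in>{-int r..0}. monom (a k) (nat (int r + k)))"

definition K_cols :: "(int \<Rightarrow> complex) \<Rightarrow> nat \<Rightarrow> complex \<Rightarrow> (complex \<times> nat) set" where
  "K_cols a r z = {(\<kappa>, q). poly (char_poly a r z) \<kappa> = 0 \<and> q < order \<kappa> (char_poly a r z)}"

text \<open>K_{i,j}(z) with columns ordered by the enumeration e of K_cols (column c is e c);
  row number m corresponds to l' = i + m; entry l'^q kappa^l' (Isabelle: 0^0 = 1).\<close>
definition K_mat :: "nat \<Rightarrow> (nat \<Rightarrow> complex \<times> nat) \<Rightarrow> int \<Rightarrow> int \<Rightarrow> complex mat" where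
  "K_mat r e i j = mat (nat (j - i + 1)) r
     (\<lambda>(m, c). (of_int (i + int m)) ^ (snd (e c)) * (fst (e c)) powi (i + int m))"

end

theory Submission
  imports Defs "HOL-Computational_Algebra.Fundamental_Theorem_Algebra"
begin

definition T :: "complex poly \<Rightarrow> complex poly" where
  "T f = pCons 0 (pderiv f)"

lemma coeff_T: "coeff (T f) j = of_nat j * coeff f j"
  by (cases j) (auto simp: T_def coeff_pderiv coeff_pCons)

lemma coeff_Tpow: "coeff ((T ^^ q) f) j = of_nat j ^ q * coeff f j"
  by (induction q) (auto simp: coeff_T)

lemma poly_sum_lt:
  fixes p :: "complex poly"
  assumes "\<forall>i\<ge>N. coeff p i = 0"
  shows "poly p x = (\<Sum>i<N. coeff p i * x ^ i)"
proof (cases "p = 0")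
  case True then show ?thesis by simp
next
  case False
  then have "degree p < N" using assms leading_coeff_0_iff not_le by blast
  have "(\<Sum>i\<le>degree p. coeff p i * x ^ i) = (\<Sum>i<N. coeff p i * x ^ i)"
    by (rule sum.mono_neutral_left) (use \<open>degree p < N\<close> in \<open>auto simp: coeff_eq_0\<close>)
  then show ?thesis by (simp add: poly_altdef)
qed

lemma T_mult: "T f = [:0,1:] * pderiv f"
  by (simp add: T_def)

lemma dvd_T:
  assumes "[:-k,1:] ^ Suc n dvd f"
  shows "[:-k,1:] ^ n dvd T f"
proof -
  obtain g where g: "f = [:-k,1:] ^ Suc n * g" using assms by blast
  have "pderiv f = [:- k, 1:] ^ Suc n * pderiv g + Polynomial.smult (of_nat (Suc n)) (g * [:- k, 1:] ^ n)"
    unfolding g by (rule lemma_order_pderiv1)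
  also have "\<dots> = [:-k,1:] ^ n * ([:- k, 1:] * pderiv g + Polynomial.smult (of_nat (Suc n)) g)"
    by (simp add: algebra_simps)
  finally have "pderiv f = [:-k,1:] ^ n * ([:- k, 1:] * pderiv g + Polynomial.smult (of_nat (Suc n)) g)" .
  then show ?thesis by (metis T_mult dvd_mult dvd_triv_left)
qed

lemma dvd_Tpow:
  assumes "[:-k,1:] ^ (n + q) dvd f"
  shows "[:-k,1:] ^ n dvd (T ^^ q) f"
  using assms
proof (induction q arbitrary: f)
  case 0 then show ?case by simp
next
  case (Suc q)
  have "[:-k,1:] ^ (n + q) dvd T f" using Suc.prems by (intro dvd_T) simp
  then show ?case using Suc.IH by (simp add: funpow_Suc_right del: funpow.simps)
qed

lemma order_T:
  assumes "k \<noteq> 0" "f \<noteq> 0" "order k f = Suc m"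
  shows "T f \<noteq> 0 \<and> order k (T f) = m"
proof -
  have root: "poly f k = 0" using assms by (simp add: order_root)
  have o: "order k f = Suc (order k (pderiv f))" by (rule order_pderiv[OF assms(2) root])
  have "degree f \<noteq> 0"
  proof
    assume "degree f = 0"
    then obtain c where "f = [:c:]" by (meson degree_eq_zeroE)
    then show False using root assms(2) by auto
  qed
  then have pd: "pderiv f \<noteq> 0" by (simp add: pderiv_eq_0_iff)
  have nz: "T f \<noteq> 0" unfolding T_mult using pd by simp
  have "order k [:0,1:] = 0" using assms(1) by (intro order_0I) simp
  then have "order k (T f) = order k (pderiv f)"
    using nz unfolding T_mult by (subst order_mult) auto
  then show ?thesis using nz o assms(3) by simp
qed

lemma nonvanish:
  assumes "k \<noteq> 0" "f \<noteq> 0"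
  shows "poly ((T ^^ order k f) f) k \<noteq> 0"
  using assms(2)
proof (induction "order k f" arbitrary: f)
  case 0
  then show ?case using order_root by (metis funpow_0)
next
  case (Suc m)
  from order_T[OF assms(1) Suc.prems Suc.hyps(2)[symmetric]]
  have "T f \<noteq> 0" "order k (T f) = m" by auto
  then have "poly ((T ^^ m) (T f)) k \<noteq> 0" using Suc.hyps(1) by metis
  then show ?case using Suc.hyps(2) by (metis funpow_Suc_right comp_apply)
qed

lemma poly_Tpow:
  assumes "\<forall>i\<ge>N. coeff f i = 0"
  shows "poly ((T ^^ q) f) x = (\<Sum>i<N. of_nat i ^ q * coeff f i * x ^ i)"
  using assms by (subst poly_sum_lt[of N]) (auto simp: coeff_Tpow)


lemma coeff_P:
  "coeff (char_poly a r z) j = (if j = r then z else 0) - (if j \<le> r then a (int j - int r) else 0)"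
proof -
  have "(\<Sum>k\<in>{-int r..0}. coeff (monom (a k) (nat (int r + k))) j)
      = (\<Sum>k\<in>{-int r..0}. if k = int j - int r then a k else 0)"
    by (rule sum.cong) (auto simp: coeff_monom)
  also have "\<dots> = (if j \<le> r then a (int j - int r) else 0)"
    by (subst sum.delta) auto
  finally show ?thesis
    by (simp add: char_poly_def coeff_diff coeff_sum coeff_monom)
qed

lemma sum_shift0:
  fixes g :: "nat \<Rightarrow> complex"
  assumes "\<forall>i<n. g i = 0"
  shows "(\<Sum>i<n+m. g i) = (\<Sum>j<m. g (n+j))"
proof (induction m)
  case 0 then show ?case using assms by simp
next
  case (Suc m) then show ?case by (simp add: add_Suc_right)
qed

lemma recur:
  assumes "(k, q) \<in> K_cols a r z"
  shows "(z - a 0) * (of_nat (n+r))^q * k^(n+r)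
       = (\<Sum>j<r. a (int j - int r) * of_nat (n+j)^q * k^(n+j))"
proof -
  define P where "P = char_poly a r z"
  define Q where "Q = monom 1 n * P"
  have qo: "q < order k P" using assms by (simp add: K_cols_def P_def)
  have "[:-k,1:] ^ (1 + q) dvd P"
    using qo order_1[of k P] le_imp_power_dvd[of "1+q" "order k P" "[:-k,1:]"] dvd_trans by auto
  then have "[:-k,1:] ^ (1 + q) dvd Q" unfolding Q_def by simp
  then have "[:-k,1:] ^ 1 dvd (T ^^ q) Q" by (rule dvd_Tpow)
  then have z0: "poly ((T ^^ q) Q) k = 0" by (simp add: dvd_iff_poly_eq_0)
  have cQ: "coeff Q i = (if i < n then 0 else coeff P (i - n))" for i
    by (simp add: Q_def coeff_monom_mult)
  have "\<forall>i\<ge>n + Suc r. coeff Q i = 0" by (auto simp: cQ P_def coeff_P)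
  then have "poly ((T ^^ q) Q) k = (\<Sum>i<n + Suc r. of_nat i ^ q * coeff Q i * k ^ i)"
    by (rule poly_Tpow)
  also have "\<dots> = (\<Sum>j<Suc r. of_nat (n+j) ^ q * coeff Q (n+j) * k ^ (n+j))"
    by (rule sum_shift0) (auto simp: cQ)
  also have "\<dots> = (\<Sum>j<Suc r. of_nat (n+j) ^ q * coeff P j * k ^ (n+j))"
    by (simp add: cQ)
  also have "\<dots> = (\<Sum>j<r. of_nat (n+j) ^ q * coeff P j * k ^ (n+j))
       + of_nat (n+r) ^ q * (z - a 0) * k ^ (n+r)"
    by (simp add: P_def coeff_P)
  also have "(\<Sum>j<r. of_nat (n+j) ^ q * coeff P j * k ^ (n+j))
      = - (\<Sum>j<r. a (int j - int r) * of_nat (n+j)^q * k^(n+j))"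
    by (simp add: P_def coeff_P sum_negf[symmetric] mult_ac)
  finally show ?thesis using z0 by (simp add: algebra_simps)
qed

definition KL :: "nat \<Rightarrow> (nat \<Rightarrow> complex \<times> nat) \<Rightarrow> nat \<Rightarrow> complex mat" where
  "KL r e l = mat r r (\<lambda>(m, c). of_nat (l + m) ^ snd (e c) * fst (e c) ^ (l + m))"

definition Cm :: "nat \<Rightarrow> (nat \<Rightarrow> complex) \<Rightarrow> complex mat" where
  "Cm r c = mat r r (\<lambda>(i, j). if i < r - 1 then (if j = Suc i then 1 else 0) else c j)"

lemma K_mat_eq: "K_mat r e (int l) (int l + int r - 1) = KL r e l"
  unfolding K_mat_def KL_def
  by (rule cong_mat) (auto simp flip: of_nat_add)

lemma det_Cm:
  assumes "r \<ge> 1"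
  shows "det (Cm r c) = (-1)^(r-1) * c 0"
proof -
  obtain s where s: "r = Suc s" using assms by (cases r) auto
  have C: "Cm r c \<in> carrier_mat r r" by (simp add: Cm_def)
  have "det (Cm r c) = (\<Sum>i<r. Cm r c $$ (i,0) * cofactor (Cm r c) i 0)"
    by (rule laplace_expansion_column[OF C]) (use assms in auto)
  also have "\<dots> = c 0 * cofactor (Cm r c) s 0"
    unfolding s by (simp add: Cm_def)
  also have "mat_delete (Cm r c) s 0 = 1\<^sub>m s"
    by (rule eq_matI) (auto simp: mat_delete_def Cm_def s)
  then have "cofactor (Cm r c) s 0 = (-1)^s"
    by (simp add: cofactor_def)
  finally show ?thesis by (simp add: s)
qed

lemma KL_Suc:
  assumes "\<And>c n. c < r \<Longrightarrow> of_nat (n+r) ^ snd (e c) * fst (e c) ^ (n+r)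
       = (\<Sum>j<r. cc j * (of_nat (n+j) ^ snd (e c) * fst (e c) ^ (n+j)))"
    and "r \<ge> 1"
  shows "KL r e (Suc l) = Cm r cc * KL r e l"
proof (rule eq_matI)
  fix i j assume i: "i < dim_row (Cm r cc * KL r e l)" and j: "j < dim_col (Cm r cc * KL r e l)"
  then have ir: "i < r" and jr: "j < r" by (auto simp: Cm_def KL_def)
  have "(Cm r cc * KL r e l) $$ (i,j) = (\<Sum>k<r. Cm r cc $$ (i,k) * KL r e l $$ (k,j))"
    using ir jr by (simp add: Cm_def KL_def scalar_prod_def atLeast0LessThan)
  also have "\<dots> = KL r e (Suc l) $$ (i,j)"
  proof (cases "i < r - 1")
    case True
    then have "(\<Sum>k<r. Cm r cc $$ (i,k) * KL r e l $$ (k,j))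
       = (\<Sum>k<r. if k = Suc i then KL r e l $$ (k,j) else 0)"
      by (intro sum.cong) (auto simp: Cm_def)
    also have "\<dots> = KL r e l $$ (Suc i,j)" using True by (subst sum.delta) auto
    finally show ?thesis using True jr by (simp add: KL_def algebra_simps)
  next
    case False
    then have ii: "i = r - 1" using ir by simp
    have "(\<Sum>k<r. Cm r cc $$ (i,k) * KL r e l $$ (k,j))
       = (\<Sum>k<r. cc k * (of_nat (l+k) ^ snd (e j) * fst (e j) ^ (l+k)))"
      using False jr ir by (intro sum.cong) (auto simp: Cm_def KL_def)
    also have "\<dots> = of_nat (l+r) ^ snd (e j) * fst (e j) ^ (l+r)"
      using assms(1)[OF jr, of l] by simp
    finally show ?thesis using ii jr assms(2) by (cases r) (simp_all add: KL_def)
  qed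
  finally show "KL r e (Suc l) $$ (i,j) = (Cm r cc * KL r e l) $$ (i,j)" by simp
qed (auto simp: KL_def Cm_def)

lemma det_KL:
  assumes "\<And>l. KL r e (Suc l) = Cm r cc * KL r e l"
  shows "det (KL r e l) = det (Cm r cc) ^ l * det (KL r e 0)"
proof (induction l)
  case 0 then show ?case by simp
next
  case (Suc l)
  have "det (KL r e (Suc l)) = det (Cm r cc) * det (KL r e l)"
    unfolding assms by (rule det_mult) (auto simp: Cm_def KL_def)
  then show ?case using Suc by simp
qed


lemma degree_P:
  assumes "z \<noteq> a 0"
  shows "degree (char_poly a r z) = r"
proof (rule antisym)
  show "degree (char_poly a r z) \<le> r" by (rule degree_le) (auto simp: coeff_P)
  show "r \<le> degree (char_poly a r z)" by (rule le_degree) (use assms in \<open>simp add: coeff_P\<close>)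
qed

lemma KL0_nonsing:
  assumes r1: "r \<ge> 1" and ar: "a (- int r) \<noteq> 0" and za: "z \<noteq> a 0"
    and bij: "bij_betw e {..<r} (K_cols a r z)"
  shows "det (KL r e 0) \<noteq> 0"
proof
  define P where "P = char_poly a r z"
  assume d0: "det (KL r e 0) = 0"
  have C: "KL r e 0 \<in> carrier_mat r r" by (simp add: KL_def)
  have "det (transpose_mat (KL r e 0)) = 0" using d0 det_transpose[OF C] by simp
  moreover have "transpose_mat (KL r e 0) \<in> carrier_mat r r" using C by simp
  ultimately obtain v where v: "v \<in> carrier_vec r" "v \<noteq> 0\<^sub>v r"
      "transpose_mat (KL r e 0) *\<^sub>v v = 0\<^sub>v r"
    using det_0_iff_vec_prod_zero by blast
  have colz: "(\<Sum>m<r. of_nat m ^ snd (e c) * fst (e c) ^ m * v $ m) = 0" if c: "c < r" for c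
  proof -
    have "(transpose_mat (KL r e 0) *\<^sub>v v) $ c = 0" using v(3) c by simp
    then show ?thesis using c v(1) by (simp add: KL_def scalar_prod_def atLeast0LessThan)
  qed
  define f where "f = (\<Sum>m<r. monom (v $ m) m)"
  have cf: "coeff f i = (if i < r then v $ i else 0)" for i
  proof -
    have "coeff f i = (\<Sum>m<r. if m = i then v $ m else 0)"
      by (simp add: f_def coeff_sum coeff_monom)
    also have "\<dots> = (if i < r then v $ i else 0)" by (auto simp: sum.delta)
    finally show ?thesis .
  qed
  have fnz: "f \<noteq> 0"
  proof
    assume "f = 0"
    then have "\<And>i. i < r \<Longrightarrow> v $ i = 0" using cf by (metis coeff_0)
    then have "v = 0\<^sub>v r" using v(1) by (intro eq_vecI) auto
    then show False using v(2) by simp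
  qed
  have degf: "degree f < r"
  proof -
    have "degree f \<le> r - 1" by (rule degree_le) (use r1 in \<open>auto simp: cf\<close>)
    then show ?thesis using r1 by simp
  qed
  have ord: "order k P \<le> order k f" for k
  proof (cases "poly P k = 0")
    case False then show ?thesis by (simp add: order_0I)
  next
    case True
    have k0: "k \<noteq> 0"
    proof
      assume "k = 0"
      then have "coeff P 0 = 0" using True by (simp add: poly_0_coeff_0)
      then show False using r1 ar by (simp add: P_def coeff_P)
    qed
    show ?thesis
    proof (rule ccontr)
      assume "\<not> ?thesis"
      then have "(k, order k f) \<in> K_cols a r z" using True by (simp add: K_cols_def P_def)
      then obtain c where c: "c < r" "e c = (k, order k f)"
        using bij unfolding bij_betw_def by (metis imageE lessThan_iff)
      have "poly ((T ^^ order k f) f) k = (\<Sum>i<r. of_nat i ^ order k f * coeff f i * k ^ i)"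
        by (rule poly_Tpow) (auto simp: cf)
      also have "\<dots> = (\<Sum>m<r. of_nat m ^ snd (e c) * fst (e c) ^ m * v $ m)"
        using c by (intro sum.cong) (auto simp: cf)
      also have "\<dots> = 0" using colz[OF c(1)] by simp
      finally show False using nonvanish[OF k0 fnz] by simp
    qed
  qed
  have Pnz: "P \<noteq> 0" using degree_P[of z a r, OF za] r1 unfolding P_def by auto
  have "proots P \<subseteq># proots f"
    by (rule mset_subset_eqI) (use Pnz fnz ord in simp)
  then have "size (proots P) \<le> size (proots f)" by (rule size_mset_mono)
  then have "degree P \<le> degree f" by (simp add: size_proots_complex)
  then show False using degf degree_P[of z a r, OF za] unfolding P_def by simp
qed

theorem lemma3p4:
  fixes r :: nat and a :: "int \<Rightarrow> complex" and z :: complex and l :: nat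
    and e :: "nat \<Rightarrow> complex \<times> nat"
  assumes "r \<ge> 1" and "a (- int r) \<noteq> 0" and "norm (a 0) < 1"
    and "norm z \<ge> 1"
    and "bij_betw e {..<r} (K_cols a r z)"
  shows "det (K_mat r e 0 (int r - 1)) \<noteq> 0 \<and>
    det (K_mat r e (int l) (int l + int r - 1)) / det (K_mat r e 0 (int r - 1))
      = (-1) ^ (l * r) * (a (- int r) / (a 0 - z)) ^ l"
proof -
  have za: "z \<noteq> a 0" using assms(3,4) by auto
  then have za': "z - a 0 \<noteq> 0" by simp
  have K0: "K_mat r e 0 (int r - 1) = KL r e 0" using K_mat_eq[of r e 0] by simp
  have nz: "det (KL r e 0) \<noteq> 0" by (rule KL0_nonsing) (use assms za in auto)
  define cc where "cc j = a (int j - int r) / (z - a 0)" for j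
  have rec: "of_nat (n+r) ^ snd (e c) * fst (e c) ^ (n+r)
       = (\<Sum>j<r. cc j * (of_nat (n+j) ^ snd (e c) * fst (e c) ^ (n+j)))" if c: "c < r" for c n
  proof -
    have "e c \<in> K_cols a r z" using assms(5) c unfolding bij_betw_def by auto
    then have "(fst (e c), snd (e c)) \<in> K_cols a r z" by simp
    from recur[OF this, of n]
    have "(z - a 0) * (of_nat (n+r) ^ snd (e c) * fst (e c) ^ (n+r))
       = (\<Sum>j<r. a (int j - int r) * (of_nat (n+j) ^ snd (e c) * fst (e c) ^ (n+j)))"
      by (simp add: mult_ac)
    then have "of_nat (n+r) ^ snd (e c) * fst (e c) ^ (n+r)
       = (\<Sum>j<r. a (int j - int r) * (of_nat (n+j) ^ snd (e c) * fst (e c) ^ (n+j))) / (z - a 0)"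
      using za' by (simp add: field_simps)
    also have "\<dots> = (\<Sum>j<r. cc j * (of_nat (n+j) ^ snd (e c) * fst (e c) ^ (n+j)))"
      by (simp add: cc_def sum_divide_distrib field_simps)
    finally show ?thesis .
  qed
  have step: "KL r e (Suc l') = Cm r cc * KL r e l'" for l'
    by (rule KL_Suc) (use rec assms(1) in auto)
  have dC: "det (Cm r cc) = (-1) ^ r * (a (- int r) / (a 0 - z))"
  proof -
    have "det (Cm r cc) = (-1)^(r-1) * cc 0" by (rule det_Cm[OF assms(1)])
    also have "\<dots> = (-1)^(r-1) * (a (- int r) / (z - a 0))" by (simp add: cc_def)
    also have "\<dots> = (-1) ^ r * (a (- int r) / (a 0 - z))"
      using assms(1) za' by (cases r) (auto simp: field_simps)
    finally show ?thesis .
  qed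
  have "det (KL r e l) = det (Cm r cc) ^ l * det (KL r e 0)"
    by (rule det_KL) (rule step)
  then have "det (KL r e l) / det (KL r e 0) = ((-1) ^ r * (a (- int r) / (a 0 - z))) ^ l"
    using nz dC by simp
  also have "\<dots> = (-1) ^ (l * r) * (a (- int r) / (a 0 - z)) ^ l"
    by (simp only: power_mult_distrib power_mult[symmetric] mult.commute)
  finally show ?thesis using nz K0 K_mat_eq[of r e l] by simp
qed

end
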